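(* There is no deterministic algorithm with advice of constant size that performs leader election in all feasible graphs. That is, for every integer $b$, there is no deterministic leader election algorithm with advice together with an assignment of advice strings of length at most $b$ to feasible graphs such that, in every feasible graph, the algorithm with the assigned advice performs leader election (in some finite time).
   Context: A graph is a simple undirected connected finite graph whose nodes have no identifiers; at each node $v$ of degree $d$ the incident edges carry distinct port numbers $0,\dots,d-1$ (local to each node). The truncated view $\mathcal{V}^0(v)$ is a single node; $\mathcal{V}^{l+1}(v)$ is the port-labelled rooted tree whose root has, for every neighbour $v_i$ of $v$, a child $x_i$ joined by an edge carrying the same two port numbers as $\{v,v_i\}$ (the one at $v$ at the root side), and $x_i$ is the root of a copy of $\mathcal{V}^l(v_i)$. The augmented truncated view $\mathcal{B}^l(v)$ is $\mathcal{V}^l(v)$ with each leaf labelled by the degree in $G$ of the node it represents. A graph is feasible if for some $l$ the views $\mathcal{B}^l(v)$ of all nodes are pairwise distinct. Model (LOCAL): synchronous rounds, all nodes start simultaneously, in each round every node exchanges arbitrary messages with all neighbours and computes arbitrarily. Leader election: every node $v$ outputs a sequence $(p_1,q_1,\dots,p_k,q_k)$ of nonnegative integers describing a simple path starting at $v$ whose $i$-th edge has port $p_i$ at its endpoint closer to $v$ and $q_i$ at the other endpoint; all these paths must end at a common node. Advice: an oracle knowing the entire port-labelled graph gives the same binary string to all nodes before the start; its length is the size of advice. In a deterministic algorithm with advice, the actions/output of node $v$ in round $r$ are a function of the advice and of $\mathcal{B}^r(v)$. *)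

theory Defs
  imports Main
begin

text \<open>Nodes are represented by natural numbers (these
names are NOT visible to the algorithm; they only serve to represent the graph).
  port G u w is the port number at u of the edge {u,w} (junk for non-edges).\<close>

record pgraph =
  verts :: "nat set"
  edges :: "(nat \<times> nat) set"
  port  :: "nat \<Rightarrow> nat \<Rightarrow> nat"

definition deg :: "pgraph \<Rightarrow> nat \<Rightarrow> nat" where
  "deg G u = card {w. (u, w) \<in> edges G}"

definition port_graph :: "pgraph \<Rightarrow> bool" where
  "port_graph G \<longleftrightarrow>
     finite (verts G) \<and> verts G \<noteq> {} \<and>
     edges G \<subseteq> verts G \<times> verts G \<and>
     sym (edges G) \<and> irrefl (edges G) \<and>
     (\<forall>u\<in>verts G. \<forall>v\<in>verts G. (u, v) \<in> (edges G)\<^sup>*) \<and>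
     (\<forall>u\<in>verts G. bij_betw (port G u) {w. (u, w) \<in> edges G} {0..<deg G u})"

definition nbr :: "pgraph \<Rightarrow> nat \<Rightarrow> nat \<Rightarrow> nat" where
  "nbr G v p = (THE w. (v, w) \<in> edges G \<and> port G v w = p)"

text \<open>Augmented truncated views: a leaf carries the degree of the node it
represents; an inner node has one child per port of the represented node, listed
in port order, each edge labelled by (port at parent side, port at child side).\<close>
datatype view = VLeaf nat | VNode "(nat \<times> nat \<times> view) list"

fun aview :: "pgraph \<Rightarrow> nat \<Rightarrow> nat \<Rightarrow> view" where
  "aview G 0 v = VLeaf (deg G v)"
| "aview G (Suc l) v =
     VNode (map (\<lambda>p. (p, port G (nbr G v p) v, aview G l (nbr G v p))) [0..<deg G v])"

definition feasible :: "pgraph \<Rightarrow> bool" where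
  "feasible G \<longleftrightarrow> (\<exists>l. inj_on (aview G l) (verts G))"

definition path_output :: "pgraph \<Rightarrow> nat \<Rightarrow> nat list \<Rightarrow> nat \<Rightarrow> bool" where
  "path_output G v out w \<longleftrightarrow>
     even (length out) \<and>
     (\<exists>vs. length vs = length out div 2 + 1 \<and> hd vs = v \<and> last vs = w \<and>
        distinct vs \<and> set vs \<subseteq> verts G \<and>
        (\<forall>i < length out div 2.
           (vs ! i, vs ! Suc i) \<in> edges G \<and>
           port G (vs ! i) (vs ! Suc i) = out ! (2 * i) \<and>
           port G (vs ! Suc i) (vs ! i) = out ! (2 * i + 1)))"

text \<open>A deterministic algorithm with advice: in round r, node v (knowing the
advice and its view B^r(v)) either continues (None) or stops with an output
(Some out). A node outputs at the first round at which it stops.\<close>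
type_synonym algorithm = "bool list \<Rightarrow> view \<Rightarrow> nat list option"

definition elects_leader :: "algorithm \<Rightarrow> bool list \<Rightarrow> pgraph \<Rightarrow> bool" where
  "elects_leader A adv G \<longleftrightarrow>
     (\<exists>ldr\<in>verts G. \<forall>v\<in>verts G. \<exists>r out.
        A adv (aview G r v) = Some out \<and>
        (\<forall>r'<r. A adv (aview G r' v) = None) \<and>
        path_output G v out ldr)"

end

theory Submission
  imports Defs
begin


definition nx :: "nat \<Rightarrow> nat \<Rightarrow> nat" where "nx n p = (if Suc p = n then 0 else Suc p)"
definition pv :: "nat \<Rightarrow> nat \<Rightarrow> nat" where "pv n p = (if p = 0 then n - 1 else p - 1)"

lemma nx_lt: "p < n \<Longrightarrow> nx n p < n" by (auto simp: nx_def)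
lemma pv_lt: "p < n \<Longrightarrow> pv n p < n" by (auto simp: pv_def)
lemma nx_pv: "p < n \<Longrightarrow> nx n (pv n p) = p" by (auto simp: pv_def nx_def)
lemma pv_nx: "p < n \<Longrightarrow> pv n (nx n p) = p" by (auto simp: pv_def nx_def)
lemma nx_ne_pv: "3 \<le> n \<Longrightarrow> p < n \<Longrightarrow> nx n p \<noteq> pv n p" by (auto simp: pv_def nx_def)
lemma nx_ne: "2 \<le> n \<Longrightarrow> p < n \<Longrightarrow> nx n p \<noteq> p" by (auto simp: nx_def)
lemma nx_eq_iff: "p < n \<Longrightarrow> x < n \<Longrightarrow> p = nx n x \<longleftrightarrow> x = pv n p" by (auto simp: pv_def nx_def)

definition cycV :: "nat list \<Rightarrow> nat set" where
  "cycV w = {p. p < length w} \<union> {length w * Suc j + p | p j. p < length w \<and> j < w!p}"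
definition cycE :: "nat list \<Rightarrow> (nat \<times> nat) set" where
  "cycE w = {(p, nx (length w) p) | p. p < length w} \<union> {(nx (length w) p, p) | p. p < length w} \<union>
    {(p, length w * Suc j + p) | p j. p < length w \<and> j < w!p} \<union> {(length w * Suc j + p, p) | p j. p < length w \<and> j < w!p}"
definition cycP :: "nat list \<Rightarrow> nat \<Rightarrow> nat \<Rightarrow> nat" where
  "cycP w u v = (if u < length w then (if v = nx (length w) u then 0 else if v < length w then 1 else v div length w + 1) else 0)"
definition cyc :: "nat list \<Rightarrow> pgraph" where
  "cyc w = \<lparr>verts = cycV w, edges = cycE w, port = cycP w\<rparr>"

lemma leaf_dec: "(p::nat) < n \<Longrightarrow> q < n \<Longrightarrow> n * a + p = n * b + q \<longleftrightarrow> a = b \<and> p = q"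
proof
  assume h: "p < n" "q < n" "n * a + p = n * b + q"
  have "(n * a + p) mod n = (n*b+q) mod n" "(n * a + p) div n = (n*b+q) div n" using h by auto
  then show "a = b \<and> p = q" using h(1,2) by simp
qed auto

lemma leaf_div[simp]: "(p::nat) < n \<Longrightarrow> (n + n * j + p) div n = Suc j"
  by (metis div_less div_mult_self4 mult_Suc_right not_less_zero verit_sum_simplify)

lemma leaf_ge: "p < length w \<Longrightarrow> \<not> length w * Suc j + p < length w" by simp

lemma nbrs_cyc:
  assumes "length w \<ge> 3" "p < length w"
  shows "{x. (p, x) \<in> cycE w} = {nx (length w) p, pv (length w) p} \<union> {length w * Suc j + p | j. j < w!p}"
proof -
  let ?n = "length w"
  show ?thesis
  proof (intro set_eqI iffI)
    fix x assume "x \<in> {x. (p, x) \<in> cycE w}"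
    then have "(p, x) \<in> cycE w" by simp
    then show "x \<in> {nx ?n p, pv ?n p} \<union> {?n * Suc j + p | j. j < w!p}"
      unfolding cycE_def using assms nx_eq_iff[of p ?n] leaf_dec[of p ?n] 
      by (auto simp: nx_lt)
  next
    fix x assume "x \<in> {nx ?n p, pv ?n p} \<union> {?n * Suc j + p | j. j < w!p}"
    then show "x \<in> {x. (p, x) \<in> cycE w}"
      unfolding cycE_def using assms nx_pv[of p ?n] pv_lt[of p ?n] by auto
  qed
qed

lemma nbrs_leaf:
  assumes "length w \<ge> 3" "p < length w" "j < w!p"
  shows "{x. (length w * Suc j + p, x) \<in> cycE w} = {p}"
  unfolding cycE_def using assms leaf_dec[of p "length w"]
  apply (auto simp: leaf_dec)
  by (metis add_lessD1 less_not_refl2 nx_lt)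

lemma port_bij_cyc:
  assumes "length w \<ge> 3" "p < length w"
  shows "bij_betw (cycP w p) {x. (p, x) \<in> cycE w} {0..<2 + w!p}"
proof -
  let ?n = "length w"
  let ?g = "\<lambda>k. if k = 0 then nx ?n p else if k = 1 then pv ?n p else ?n * Suc (k - 2) + p"
  show ?thesis unfolding nbrs_cyc[OF assms]
  proof (rule bij_betw_byWitness[where f' = ?g])
    show "\<forall>a\<in>{nx ?n p, pv ?n p} \<union> {?n * Suc j + p |j. j < w ! p}. ?g (cycP w p a) = a"
      using assms nx_ne_pv[of ?n p] pv_lt[of p ?n] nx_lt[of p ?n] by (auto simp: cycP_def)
    show "\<forall>a'\<in>{0..<2 + w ! p}. cycP w p (?g a') = a'"
      using assms nx_ne_pv[of ?n p] pv_lt[of p ?n] nx_lt[of p ?n] by (auto simp: cycP_def)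
    show "cycP w p ` ({nx ?n p, pv ?n p} \<union> {?n * Suc j + p |j. j < w ! p}) \<subseteq> {0..<2 + w ! p}"
      using assms nx_ne_pv[of ?n p] pv_lt[of p ?n] nx_lt[of p ?n] by (auto simp: cycP_def)
    show "?g ` {0..<2 + w ! p} \<subseteq> {nx ?n p, pv ?n p} \<union> {?n * Suc j + p |j. j < w ! p}"
    proof
      fix y assume "y \<in> ?g ` {0..<2 + w ! p}"
      then obtain k where k0: "k \<in> {0..<2 + w!p}" "y = ?g k" by (rule imageE)
      then have k: "k < 2 + w!p" "y = ?g k" by auto
      show "y \<in> {nx ?n p, pv ?n p} \<union> {?n * Suc j + p |j. j < w ! p}"
      proof (cases "k \<ge> 2")
        case True
        then have "y = ?n * Suc (k - 2) + p" "k - 2 < w!p" using k by (auto simp: numeral_eq_Suc)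
        then show ?thesis by blast
      next
        case False then show ?thesis using k by auto
      qed
    qed
  qed
qed

lemma deg_cyc: "length w \<ge> 3 \<Longrightarrow> p < length w \<Longrightarrow> deg (cyc w) p = 2 + w!p"
  unfolding deg_def cyc_def using bij_betw_same_card[OF port_bij_cyc] by simp

lemma deg_leaf: "length w \<ge> 3 \<Longrightarrow> p < length w \<Longrightarrow> j < w!p \<Longrightarrow> deg (cyc w) (length w * Suc j + p) = 1"
  unfolding deg_def cyc_def using nbrs_leaf by simp

lemma cycV_mem: "x \<in> cycV w \<longleftrightarrow> x < length w \<or> (\<exists>p j. p < length w \<and> j < w!p \<and> x = length w * Suc j + p)"
  unfolding cycV_def by auto

lemma port_graph_cyc:
  assumes n3: "length w \<ge> 3"
  shows "port_graph (cyc w)"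
proof -
  let ?n = "length w"
  let ?E = "cycE w"
  have fin: "finite (cycV w)"
  proof (rule finite_subset)
    show "cycV w \<subseteq> {..< ?n * Suc (sum_list w) + ?n}"
    proof
      fix x assume "x \<in> cycV w"
      then consider "x < ?n" | p j where "p < ?n" "j < w!p" "x = ?n * Suc j + p" unfolding cycV_mem by blast
      then show "x \<in> {..< ?n * Suc (sum_list w) + ?n}"
      proof cases
        case 1 then show ?thesis by simp
      next
        case 2
        have "w!p \<le> sum_list w" using 2 by (simp add: elem_le_sum_list)
        then have "j \<le> sum_list w" using 2 by simp
        then have h: "?n * j \<le> ?n * sum_list w" by (rule mult_le_mono2)
        have "x < ?n * Suc (sum_list w) + ?n" unfolding 2(3) mult_Suc_right using h 2(1) by linarith
        then show ?thesis by simp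
      qed
    qed
  qed simp
  have sub: "?E \<subseteq> cycV w \<times> cycV w"
    unfolding cycE_def cycV_def using nx_lt[of _ ?n] by auto
  have sym: "sym ?E" unfolding cycE_def sym_def by blast
  have ne: "p \<noteq> nx ?n p" if "p < ?n" for p using nx_ne[of ?n p] n3 that by auto
  have irr: "irrefl ?E" unfolding cycE_def irrefl_def using ne by auto
  have e0: "(0, p) \<in> ?E\<^sup>*" if "p < ?n" for p
    using that
  proof (induction p)
    case 0 then show ?case by simp
  next
    case (Suc p)
    then have "p < ?n" by simp
    then have "(p, nx ?n p) \<in> ?E" unfolding cycE_def by blast
    moreover have "nx ?n p = Suc p" using Suc.prems by (simp add: nx_def)
    moreover have "(0, p) \<in> ?E\<^sup>*" using Suc by simp
    ultimately show ?case by (metis rtrancl.rtrancl_into_rtrancl)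
  qed
  have e0v: "(0, x) \<in> ?E\<^sup>*" if "x \<in> cycV w" for x
  proof -
    from that consider "x < ?n" | p j where "p < ?n" "j < w!p" "x = ?n * Suc j + p" unfolding cycV_mem by blast
    then show ?thesis
    proof cases
      case 1 then show ?thesis using e0 by blast
    next
      case 2
      then have "(p, x) \<in> ?E" unfolding cycE_def by blast
      then show ?thesis using e0[OF 2(1)] by (meson rtrancl.rtrancl_into_rtrancl)
    qed
  qed
  have conn: "\<forall>u\<in>cycV w. \<forall>v\<in>cycV w. (u, v) \<in> ?E\<^sup>*"
  proof (intro ballI)
    fix u v assume "u \<in> cycV w" "v \<in> cycV w"
    have "(u, 0) \<in> ?E\<^sup>*" using e0v[OF \<open>u \<in> cycV w\<close>] sym_rtrancl[OF sym] by (meson symD)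
    then show "(u, v) \<in> ?E\<^sup>*" using e0v[OF \<open>v \<in> cycV w\<close>] by simp
  qed
  have bij: "\<forall>u\<in>cycV w. bij_betw (cycP w u) {x. (u, x) \<in> ?E} {0..<deg (cyc w) u}"
  proof
    fix x assume "x \<in> cycV w"
    then consider "x < ?n" | p j where "p < ?n" "j < w!p" "x = ?n * Suc j + p" unfolding cycV_mem by blast
    then show "bij_betw (cycP w x) {y. (x, y) \<in> ?E} {0..<deg (cyc w) x}"
    proof cases
      case 1 then show ?thesis using port_bij_cyc[OF n3 1] deg_cyc[OF n3 1] by simp
    next
      case 2
      have "bij_betw (cycP w x) {p} {0..<1}" using 2 by (auto simp: cycP_def bij_betw_def)
      then show ?thesis using 2 nbrs_leaf[OF n3 2(1,2)] deg_leaf[OF n3 2(1,2)] by simp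
    qed
  qed
  have cV: "verts (cyc w) = cycV w" and cE: "edges (cyc w) = cycE w" and cP: "port (cyc w) = cycP w"
    by (simp_all add: cyc_def)
  have "0 \<in> cycV w" using n3 unfolding cycV_def by auto
  then have ne: "cycV w \<noteq> {}" by blast
  show ?thesis unfolding port_graph_def cV cE cP using fin sub sym irr conn bij ne by blast
qed



lemma nbr_port:
  assumes "port_graph G" "v \<in> verts G" "(v, x) \<in> edges G"
  shows "nbr G v (port G v x) = x"
proof -
  have inj: "inj_on (port G v) {w. (v, w) \<in> edges G}"
    using assms(1,2) unfolding port_graph_def bij_betw_def by blast
  show ?thesis unfolding nbr_def
  proof (rule the_equality)
    show "(v, x) \<in> edges G \<and> port G v x = port G v x" using assms by simp
    fix y assume "(v, y) \<in> edges G \<and> port G v y = port G v x"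
    then show "y = x" using inj assms(3) by (auto dest: inj_onD)
  qed
qed

fun lview :: "(int \<Rightarrow> nat) \<Rightarrow> nat \<Rightarrow> view" where
  "lview f 0 = VLeaf (2 + f 0)"
| "lview f (Suc 0) = VNode ([(0, 1, lview (\<lambda>t. f (t + 1)) 0), (1, 0, lview (\<lambda>t. f (t - 1)) 0)]
      @ map (\<lambda>j. (Suc (Suc j), 0, VLeaf 1)) [0..<f 0])"
| "lview f (Suc (Suc R)) = VNode ([(0, 1, lview (\<lambda>t. f (t + 1)) (Suc R)), (1, 0, lview (\<lambda>t. f (t - 1)) (Suc R))]
      @ map (\<lambda>j. (Suc (Suc j), 0, VNode [(0, Suc (Suc j), lview f R)])) [0..<f 0])"

definition pat :: "nat list \<Rightarrow> nat \<Rightarrow> int \<Rightarrow> nat" where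
  "pat w p t = w ! nat ((int p + t) mod int (length w))"

lemma pat0: "p < length w \<Longrightarrow> pat w p 0 = w ! p"
  by (simp add: pat_def)

lemma int_nx: "p < n \<Longrightarrow> int (nx n p) = (int p + 1) mod int n"
proof (cases "Suc p = n")
  case True
  then have e: "int n = int p + 1" by simp
  have "(int p + 1) mod int n = 0" unfolding e by simp
  then show ?thesis using True by (simp add: nx_def)
qed (auto simp: nx_def)

lemma int_pv: "p < n \<Longrightarrow> int (pv n p) = (int p - 1) mod int n"
proof (cases "p = 0")
  case True
  assume "p < n"
  then show ?thesis using True by (simp add: pv_def zmod_minus1 of_nat_diff)
next
  case False
  assume "p < n"
  then show ?thesis using False by (simp add: pv_def of_nat_diff)
qed

lemma pat_nx: "p < length w \<Longrightarrow> (\<lambda>t. pat w p (t + 1)) = pat w (nx (length w) p)"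
  unfolding pat_def by (auto simp: int_nx mod_add_right_eq ac_simps)

lemma pat_pv: "p < length w \<Longrightarrow> (\<lambda>t. pat w p (t - 1)) = pat w (pv (length w) p)"
  unfolding pat_def fun_eq_iff by (simp add: int_pv mod_add_right_eq algebra_simps)

lemma nxnx: "3 \<le> n \<Longrightarrow> p < n \<Longrightarrow> nx n (nx n p) \<noteq> p" by (auto simp: nx_def)

lemma upt_split2: "[0..<2 + m] = [0, 1] @ map (\<lambda>j. Suc (Suc j)) [0..<m]"
  by (induction m) (auto simp: numeral_2_eq_2)

context
  fixes w :: "nat list"
  assumes n3: "length w \<ge> 3"
begin

abbreviation "cn \<equiv> length w"

lemma cG: "verts (cyc w) = cycV w" "edges (cyc w) = cycE w" "port (cyc w) = cycP w"
  by (simp_all add: cyc_def)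

lemma pg: "port_graph (cyc w)" using port_graph_cyc[OF n3] .

lemma vin: "p < cn \<Longrightarrow> p \<in> verts (cyc w)" by (simp add: cG cycV_def)
lemma vin_leaf: "p < cn \<Longrightarrow> j < w!p \<Longrightarrow> cn * Suc j + p \<in> verts (cyc w)"
  by (auto simp: cG cycV_def)

lemma e_nx: "p < cn \<Longrightarrow> (p, nx cn p) \<in> edges (cyc w)" by (auto simp: cG cycE_def)
lemma e_pv: "p < cn \<Longrightarrow> (p, pv cn p) \<in> edges (cyc w)"
proof -
  assume "p < cn"
  then have "(nx cn (pv cn p), pv cn p) \<in> cycE w" unfolding cycE_def using pv_lt[of p cn] by blast
  then show ?thesis using nx_pv[OF \<open>p<cn\<close>] by (simp add: cG)
qed
lemma e_leaf: "p < cn \<Longrightarrow> j < w!p \<Longrightarrow> (p, cn * Suc j + p) \<in> edges (cyc w)" by (auto simp: cG cycE_def)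
lemma e_leaf': "p < cn \<Longrightarrow> j < w!p \<Longrightarrow> (cn * Suc j + p, p) \<in> edges (cyc w)" by (auto simp: cG cycE_def)

lemma P_nx: "p < cn \<Longrightarrow> cycP w p (nx cn p) = 0" by (simp add: cycP_def)
lemma P_pv: "p < cn \<Longrightarrow> cycP w p (pv cn p) = 1"
proof -
  assume h: "p < cn"
  then have "pv cn p \<noteq> nx cn p" using nx_ne_pv[OF n3 h] by metis
  then show ?thesis using h pv_lt[OF h] by (simp add: cycP_def)
qed
lemma P_leaf: "p < cn \<Longrightarrow> cycP w p (cn * Suc j + p) = Suc (Suc j)"
  using nx_lt[of p cn] by (auto simp: cycP_def)
lemma P_leaf': "p < cn \<Longrightarrow> cycP w (cn * Suc j + p) p = 0" by (simp add: cycP_def)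
lemma P_nx': "p < cn \<Longrightarrow> cycP w (nx cn p) p = 1"
proof -
  assume h: "p < cn"
  then have "p \<noteq> nx cn (nx cn p)" using nxnx[OF n3 h] by metis
  then show ?thesis using h nx_lt[OF h] by (simp add: cycP_def)
qed
lemma P_pv': "p < cn \<Longrightarrow> cycP w (pv cn p) p = 0" using nx_pv[of p cn] pv_lt[of p cn] by (auto simp: cycP_def)

lemma nbr0: "p < cn \<Longrightarrow> nbr (cyc w) p 0 = nx cn p"
  using nbr_port[OF pg vin e_nx] P_nx by (simp add: cG)
lemma nbr1: "p < cn \<Longrightarrow> nbr (cyc w) p 1 = pv cn p"
  using nbr_port[OF pg vin e_pv] P_pv by (simp add: cG)
lemma nbrl: "p < cn \<Longrightarrow> j < w!p \<Longrightarrow> nbr (cyc w) p (Suc (Suc j)) = cn * Suc j + p"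
  using nbr_port[OF pg vin e_leaf] P_leaf by (simp add: cG)
lemma nbrl': "p < cn \<Longrightarrow> j < w!p \<Longrightarrow> nbr (cyc w) (cn * Suc j + p) 0 = p"
  using nbr_port[OF pg vin_leaf e_leaf'] P_leaf' by (simp add: cG)

lemma aview_leaf: "p < cn \<Longrightarrow> j < w!p \<Longrightarrow>
  aview (cyc w) (Suc R) (cn * Suc j + p) = VNode [(0, Suc (Suc j), aview (cyc w) R p)]"
  using deg_leaf[OF n3] nbrl' P_leaf by (simp add: cG)

lemma aview_leaf0: "p < cn \<Longrightarrow> j < w!p \<Longrightarrow> aview (cyc w) 0 (cn * Suc j + p) = VLeaf 1"
  using deg_leaf[OF n3] by simp

lemma aview_node: "p < cn \<Longrightarrow> aview (cyc w) (Suc R) p =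
   VNode ([(0, 1, aview (cyc w) R (nx cn p)), (1, 0, aview (cyc w) R (pv cn p))] @
     map (\<lambda>j. (Suc (Suc j), 0, aview (cyc w) R (cn * Suc j + p))) [0..<w!p])"
proof -
  assume h: "p < cn"
  define F where "F = (\<lambda>k. (k, port (cyc w) (nbr (cyc w) p k) p, aview (cyc w) R (nbr (cyc w) p k)))"
  have "aview (cyc w) (Suc R) p = VNode (map F [0..<2 + w!p])"
    unfolding F_def using deg_cyc[OF n3 h] by simp
  also have "\<dots> = VNode (map F ([0, 1] @ map (\<lambda>j. Suc (Suc j)) [0..<w!p]))"
    by (simp only: upt_split2)
  also have "map F ([0, 1] @ map (\<lambda>j. Suc (Suc j)) [0..<w!p]) =
     [(0, 1, aview (cyc w) R (nx cn p)), (1, 0, aview (cyc w) R (pv cn p))] @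
     map (\<lambda>j. (Suc (Suc j), 0, aview (cyc w) R (cn * Suc j + p))) [0..<w!p]"
  proof -
    have "map F (map (\<lambda>j. Suc (Suc j)) [0..<w!p]) = map (\<lambda>j. (Suc (Suc j), 0, aview (cyc w) R (cn * Suc j + p))) [0..<w!p]"
      unfolding map_map
    proof (rule map_cong)
      fix j assume "j \<in> set [0..<w!p]"
      then have j: "j < w!p" by simp
      show "(F \<circ> (\<lambda>j. Suc (Suc j))) j = (Suc (Suc j), 0, aview (cyc w) R (cn * Suc j + p))"
        unfolding F_def using nbrl[OF h j] P_leaf'[OF h, of j] by (simp add: cG)
    qed simp
    moreover have "F 0 = (0, 1, aview (cyc w) R (nx cn p))" unfolding F_def using nbr0[OF h] P_nx'[OF h] by (simp add: cG)
    moreover have "F 1 = (1, 0, aview (cyc w) R (pv cn p))" unfolding F_def using nbr1[OF h] P_pv'[OF h] by (simp add: cG)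
    ultimately show ?thesis by simp
  qed
  finally show ?thesis .
qed

lemma aview_lview: "p < cn \<Longrightarrow> aview (cyc w) R p = lview (pat w p) R"
proof (induction R arbitrary: p rule: less_induct)
  case (less R)
  show ?case
  proof (cases R)
    case 0 then show ?thesis using less.prems deg_cyc[OF n3] by (simp add: pat0)
  next
    case (Suc R')
    note IH = less.IH[of R']
    have a: "aview (cyc w) R' (nx cn p) = lview (\<lambda>t. pat w p (t + 1)) R'"
      using IH Suc nx_lt[of p cn] less.prems pat_nx by simp
    have b: "aview (cyc w) R' (pv cn p) = lview (\<lambda>t. pat w p (t - 1)) R'"
      using IH Suc pv_lt[of p cn] less.prems pat_pv by simp
    have node: "aview (cyc w) R p = VNode ([(0, 1, lview (\<lambda>t. pat w p (t + 1)) R'), (1, 0, lview (\<lambda>t. pat w p (t - 1)) R')] @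
     map (\<lambda>j. (Suc (Suc j), 0, aview (cyc w) R' (cn * Suc j + p))) [0..<w!p])"
      using aview_node[OF less.prems, of R'] Suc a b by simp
    show ?thesis
    proof (cases R')
      case 0
      have "map (\<lambda>j. (Suc (Suc j), 0, aview (cyc w) R' (cn * Suc j + p))) [0..<w!p] =
        map (\<lambda>j. (Suc (Suc j), 0, VLeaf 1)) [0..<w!p]"
        by (rule map_cong) (use aview_leaf0 less.prems 0 in auto)
      then show ?thesis unfolding node using Suc 0 less.prems by (simp add: pat0)
    next
      case (Suc R'')
      have c: "aview (cyc w) R'' p = lview (pat w p) R''" using less.IH[of R''] Suc \<open>R = Suc R'\<close> less.prems by simp
      have "map (\<lambda>j. (Suc (Suc j), 0, aview (cyc w) R' (cn * Suc j + p))) [0..<w!p] =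
        map (\<lambda>j. (Suc (Suc j), 0, VNode [(0, Suc (Suc j), lview (pat w p) R'')])) [0..<w!p]"
        by (rule map_cong) (use aview_leaf less.prems Suc c in auto)
      then show ?thesis unfolding node using \<open>R = Suc R'\<close> Suc less.prems by (simp add: pat0)
    qed
  qed
qed

end



lemma lview_cong: "(\<And>t. \<bar>t\<bar> \<le> int R \<Longrightarrow> f t = g t) \<Longrightarrow> lview f R = lview g R"
proof (induction R arbitrary: f g rule: less_induct)
  case (less R)
  show ?case
  proof (cases R)
    case 0 then show ?thesis using less.prems[of 0] by simp
  next
    case (Suc R')
    have a: "lview (\<lambda>t. f (t + 1)) R' = lview (\<lambda>t. g (t + 1)) R'"
      by (rule less.IH) (use Suc less.prems in auto)
    have b: "lview (\<lambda>t. f (t - 1)) R' = lview (\<lambda>t. g (t - 1)) R'"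
      by (rule less.IH) (use Suc less.prems in auto)
    have f0: "f 0 = g 0" using less.prems[of 0] by simp
    show ?thesis
    proof (cases R')
      case 0 then show ?thesis using a b f0 Suc by simp
    next
      case (Suc R'')
      have c: "lview f R'' = lview g R''"
        by (rule less.IH) (use Suc \<open>R = Suc R'\<close> less.prems in auto)
      show ?thesis using a b c f0 Suc \<open>R = Suc R'\<close> by simp
    qed
  qed
qed

fun vdeg :: "view \<Rightarrow> nat" where
  "vdeg (VLeaf d) = d" | "vdeg (VNode xs) = length xs"
fun fwd :: "view \<Rightarrow> view" where
  "fwd (VNode (x # xs)) = snd (snd x)" | "fwd _ = VLeaf 0"

lemma vdeg_lview: "vdeg (lview f R) = 2 + f 0"
  by (cases R; cases "R - 1") auto

lemma fwd_lview: "fwd (lview f (Suc R)) = lview (\<lambda>t. f (t + 1)) R"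
  by (cases R) auto

lemma fwd_pow: "k \<le> R \<Longrightarrow> (fwd ^^ k) (lview f R) = lview (\<lambda>t. f (t + int k)) (R - k)"
proof (induction k)
  case 0 then show ?case by simp
next
  case (Suc k)
  then have "R - k = Suc (R - Suc k)" by simp
  then have "(fwd ^^ Suc k) (lview f R) = lview (\<lambda>t. f (t + 1 + int k)) (R - Suc k)"
    using Suc by (simp add: fwd_lview)
  also have "(\<lambda>t. f (t + 1 + int k)) = (\<lambda>t. f (t + int (Suc k)))" by (simp add: ac_simps)
  finally show ?case .
qed

lemma lview_eq_pt: "lview f R = lview g R \<Longrightarrow> k \<le> R \<Longrightarrow> f (int k) = g (int k)"
proof -
  assume "lview f R = lview g R" "k \<le> R"
  then have "vdeg ((fwd ^^ k) (lview f R)) = vdeg ((fwd ^^ k) (lview g R))" by simp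
  then show ?thesis using fwd_pow[OF \<open>k \<le> R\<close>] vdeg_lview by simp
qed

lemma vdeg_aview: "vdeg (aview G R v) = deg G v"
  by (cases R) auto

lemma pat_nat: "pat w p (int k) = w ! ((p + k) mod length w)"
  unfolding pat_def by (simp add: nat_mod_distrib nat_add_distrib flip: of_nat_add of_nat_mod)

lemma mod_cancel_aux: assumes "p < n" "q < n" "(p + k) mod n = (q + k) mod (n::nat)" shows "p = q" 
proof -
  have "int ((p+k) mod n) = int ((q+k) mod n)" using assms(3) by simp
  then have "(int p + int k) mod int n = (int q + int k) mod int n" by (simp add: of_nat_mod)
  then have "((int p + int k) - int k) mod int n = ((int q + int k) - int k) mod int n"
    by (rule mod_diff_cong) simp
  then have "int p mod int n = int q mod int n" by simp
  then show ?thesis using assms(1,2) by simp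
qed

lemma lview_pat_inj:
  assumes uq: "\<And>q. q < length w \<Longrightarrow> w ! q = c \<longleftrightarrow> q = u" and u: "u < length w"
    and p: "p < length w" and q: "q < length w" and R: "length w \<le> R"
    and eq: "lview (pat w p) R = lview (pat w q) R"
  shows "p = q"
proof -
  let ?n = "length w"
  define k where "k = (u + ?n - p) mod ?n"
  have "?n > 0" using u by (cases w) auto
  then have "k < ?n" unfolding k_def by simp
  then have kR: "k \<le> R" using R by linarith
  have "(p + k) mod ?n = u" unfolding k_def using p u
    by (metis add.commute add_diff_inverse_nat add_lessD1 mod_add_right_eq
    mod_add_self1 mod_less order_less_imp_not_less)
  then have "pat w p (int k) = c" using uq u by (simp add: pat_nat)
  then have "pat w q (int k) = c" using lview_eq_pt[OF eq kR] by simp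
  then have "w ! ((q + k) mod ?n) = c" by (simp add: pat_nat)
  moreover have "(q + k) mod ?n < ?n" using \<open>?n > 0\<close> by simp
  ultimately have "(q + k) mod ?n = u" using uq by blast
  then show "p = q" using mod_cancel_aux[OF p q, of k] \<open>(p + k) mod ?n = u\<close> by simp
qed

lemma feasible_cyc:
  assumes n3: "3 \<le> length w" and uq: "\<And>q. q < length w \<Longrightarrow> w ! q = c \<longleftrightarrow> q = u" and u: "u < length w"
  shows "feasible (cyc w)"
  unfolding feasible_def
proof (intro exI inj_onI)
  let ?n = "length w"
  fix x y assume x: "x \<in> verts (cyc w)" and y: "y \<in> verts (cyc w)"
    and eq: "aview (cyc w) (Suc ?n) x = aview (cyc w) (Suc ?n) y"
  have cyc_inj: "p = q" if "p < ?n" "q < ?n" "aview (cyc w) R p = aview (cyc w) R q" "?n \<le> R" for p q R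
    using lview_pat_inj[OF uq u that(1,2) that(4)] aview_lview[OF n3] that by simp
  have dg: "vdeg (aview (cyc w) (Suc ?n) x) = vdeg (aview (cyc w) (Suc ?n) y)" using eq by simp
  from x consider "x < ?n" | p j where "p < ?n" "j < w!p" "x = ?n * Suc j + p" unfolding cG[OF n3] cycV_mem by blast
  then show "x = y"
  proof cases
    case 1
    from y consider "y < ?n" | p j where "p < ?n" "j < w!p" "y = ?n * Suc j + p" unfolding cG[OF n3] cycV_mem by blast
    then show ?thesis
    proof cases
      case 1 then show ?thesis using cyc_inj[OF \<open>x < ?n\<close> 1 eq] by simp
    next
      case 2 then show ?thesis using dg 1 deg_cyc[OF n3] deg_leaf[OF n3] by (simp add: vdeg_aview)
    qed
  next
    case 2
    note xx = 2
    from y consider "y < ?n" | p' j' where "p' < ?n" "j' < w!p'" "y = ?n * Suc j' + p'" unfolding cG[OF n3] cycV_mem by blast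
    then show ?thesis
    proof cases
      case 1 then show ?thesis using dg 2 deg_cyc[OF n3] deg_leaf[OF n3] by (simp add: vdeg_aview)
    next
      case 2
      have "Suc (Suc j) = Suc (Suc j') \<and> aview (cyc w) ?n p = aview (cyc w) ?n p'"
        using eq aview_leaf[OF n3 xx(1,2)] aview_leaf[OF n3 2(1,2)] xx(3) 2(3) by simp
      then have "j = j'" "p = p'" using cyc_inj[OF xx(1) 2(1), of ?n] by auto
      then show ?thesis using xx(3) 2(3) by simp
    qed
  qed
qed



lemma path_unique:
  assumes pg: "port_graph G" and pu: "path_output G u out x" and pv: "path_output G v out x"
  shows "u = v"
proof -
  let ?k = "length out div 2"
  obtain vs where vs: "length vs = ?k + 1" "hd vs = u" "last vs = x" "set vs \<subseteq> verts G"
    "\<forall>i < ?k. (vs ! i, vs ! Suc i) \<in> edges G \<and> port G (vs ! Suc i) (vs ! i) = out ! (2 * i + 1)"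
    using pu unfolding path_output_def by blast
  obtain vs' where vs': "length vs' = ?k + 1" "hd vs' = v" "last vs' = x" "set vs' \<subseteq> verts G"
    "\<forall>i < ?k. (vs' ! i, vs' ! Suc i) \<in> edges G \<and> port G (vs' ! Suc i) (vs' ! i) = out ! (2 * i + 1)"
    using pv unfolding path_output_def by blast
  have symE: "sym (edges G)" using pg unfolding port_graph_def by blast
  have main: "vs ! (?k - i) = vs' ! (?k - i)" if "i \<le> ?k" for i
    using that
  proof (induction i)
    case 0
    have "vs \<noteq> []" "vs' \<noteq> []" using vs(1) vs'(1) by auto
    then have "vs ! ?k = last vs" "vs' ! ?k = last vs'" using vs(1) vs'(1) by (simp_all add: last_conv_nth)
    then show ?case using vs(3) vs'(3) by simp
  next
    case (Suc i)
    define m where "m = ?k - Suc i"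
    have m: "m < ?k" "Suc m = ?k - i" using Suc.prems unfolding m_def by auto
    have y: "vs ! Suc m = vs' ! Suc m" using Suc m by simp
    let ?y = "vs ! Suc m"
    have yv: "?y \<in> verts G" using vs(1,4) m by (simp add: subset_code(1))
    have e1: "(?y, vs ! m) \<in> edges G" using vs(5) m symE by (meson symD)
    have e2: "(?y, vs' ! m) \<in> edges G" using vs'(5) m symE y by (metis symD)
    have p1: "port G ?y (vs ! m) = port G ?y (vs' ! m)" using vs(5) vs'(5) m y by metis
    have inj: "inj_on (port G ?y) {w. (?y, w) \<in> edges G}"
      using pg yv unfolding port_graph_def bij_betw_def by blast
    have "vs ! m = vs' ! m" using inj_onD[OF inj p1] e1 e2 by simp
    then show ?case unfolding m_def by simp
  qed
  have "vs ! 0 = vs' ! 0" using main[of ?k] by simp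
  moreover have "vs ! 0 = u" using vs(1,2) by (cases vs) auto
  moreover have "vs' ! 0 = v" using vs'(1,2) by (cases vs') auto
  ultimately show ?thesis by simp
qed

lemma stop_transfer:
  assumes s1: "A s (aview G R v) = Some out" "\<forall>r<R. A s (aview G r v) = None"
    and s2: "A s (aview D r' x) = Some out'" "\<forall>r<r'. A s (aview D r x) = None"
    and eqv: "\<And>r. r \<le> R \<Longrightarrow> aview D r x = aview G r v"
  shows "out' = out"
proof -
  have "r' = R"
  proof (rule ccontr)
    assume "r' \<noteq> R"
    then consider "r' < R" | "R < r'" by linarith
    then show False
    proof cases
      case 1 then show False using s1(2) s2(1) eqv[of r'] by simp
    next
      case 2
      then have "A s (aview D R x) = None" using s2(2) by blast
      then show False using s1(1) eqv[of R] by simp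
    qed
  qed
  then show ?thesis using s1 s2 eqv[of R] by simp
qed



definition sr :: "algorithm \<Rightarrow> (pgraph \<Rightarrow> bool list) \<Rightarrow> nat list \<Rightarrow> nat" where
  "sr A orc w = (LEAST r. A (orc (cyc w)) (aview (cyc w) r 0) \<noteq> None)"

definition blk :: "nat \<Rightarrow> nat list \<Rightarrow> nat list" where
  "blk M v = concat (replicate M v)"

definition Mv :: "algorithm \<Rightarrow> (pgraph \<Rightarrow> bool list) \<Rightarrow> nat list list \<Rightarrow> nat" where
  "Mv A orc L = 2 * sum_list (map (sr A orc) L) + 4"

fun ws :: "algorithm \<Rightarrow> (pgraph \<Rightarrow> bool list) \<Rightarrow> nat \<Rightarrow> nat list list" where
  "ws A orc 0 = [[0, 0, 1]]"
| "ws A orc (Suc k) = ws A orc k @ [concat (map (blk (Mv A orc (ws A orc k))) (ws A orc k)) @ [k + 2]]"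

definition wd :: "algorithm \<Rightarrow> (pgraph \<Rightarrow> bool list) \<Rightarrow> nat \<Rightarrow> nat list" where
  "wd A orc k = ws A orc k ! k"

lemma ws_len: "length (ws A orc k) = Suc k" by (induction k) auto

lemma ws_nth: "i \<le> k \<Longrightarrow> ws A orc k ! i = wd A orc i"
proof (induction k)
  case 0 then show ?case by (simp add: wd_def)
next
  case (Suc k)
  show ?case
  proof (cases "i = Suc k")
    case True then show ?thesis by (simp add: wd_def)
  next
    case False then show ?thesis using Suc ws_len[of A orc k] by (simp add: nth_append)
  qed
qed

lemma wd_Suc: "wd A orc (Suc k) = concat (map (blk (Mv A orc (ws A orc k))) (ws A orc k)) @ [k + 2]"
  unfolding wd_def using ws_len[of A orc k] by (simp add: nth_append)

lemma blk_len: "length (blk M v) = M * length v" unfolding blk_def by (induction M) auto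

lemma set_blk: "set (blk M v) \<subseteq> set v" unfolding blk_def by auto

lemma wd_vals: "x \<in> set (wd A orc k) \<Longrightarrow> x \<le> k + 1"
proof (induction k arbitrary: x rule: less_induct)
  case (less k)
  show ?case
  proof (cases k)
    case 0 then show ?thesis using less.prems by (auto simp: wd_def)
  next
    case (Suc k')
    from less.prems have "x \<in> set (concat (map (blk (Mv A orc (ws A orc k'))) (ws A orc k'))) \<or> x = k' + 2"
      unfolding Suc wd_Suc by auto
    then show ?thesis
    proof
      assume "x \<in> set (concat (map (blk (Mv A orc (ws A orc k'))) (ws A orc k')))"
      then obtain v where v: "v \<in> set (ws A orc k')" "x \<in> set v" using set_blk by fastforce
      then obtain i where i: "i < Suc k'" "v = ws A orc k' ! i" using ws_len[of A orc k'] by (metis in_set_conv_nth)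
      then have "v = wd A orc i" using ws_nth by simp
      then show ?thesis using less.IH[of i x] i v Suc by simp
    qed (use Suc in simp)
  qed
qed

lemma wd_len: "length (wd A orc k) \<ge> 3"
proof (cases k)
  case 0 then show ?thesis by (simp add: wd_def)
next
  case (Suc k')
  let ?L = "ws A orc k'"
  let ?M = "Mv A orc ?L"
  have "?L ! 0 \<in> set ?L" using ws_len[of A orc k'] by simp
  then have "length (blk ?M (?L ! 0)) \<in> set (map length (map (blk ?M) ?L))" by simp
  then have "length (blk ?M (?L ! 0)) \<le> sum_list (map length (map (blk ?M) ?L))"
    by (rule member_le_sum_list) auto
  then have "length (blk ?M (?L ! 0)) \<le> length (concat (map (blk ?M) ?L))"
    by (simp only: length_concat)
  moreover have "length (blk ?M (?L ! 0)) = ?M * 3" using ws_nth[of 0 k' A orc] by (simp add: blk_len wd_def)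
  moreover have "?M \<ge> 4" by (simp add: Mv_def)
  ultimately show ?thesis unfolding Suc wd_Suc by simp
qed

lemma wd_uniq: "q < length (wd A orc k) \<Longrightarrow> wd A orc k ! q = k + 1 \<longleftrightarrow> q = length (wd A orc k) - 1"
proof (cases k)
  case 0
  assume "q < length (wd A orc k)"
  then show ?thesis using 0 by (auto simp: wd_def less_Suc_eq nth_Cons split: nat.splits)
next
  case (Suc k')
  assume q: "q < length (wd A orc k)"
  let ?C = "concat (map (blk (Mv A orc (ws A orc k'))) (ws A orc k'))"
  have w: "wd A orc k = ?C @ [k' + 2]" unfolding Suc wd_Suc ..
  show ?thesis
  proof (cases "q < length ?C")
    case True
    then have "wd A orc k ! q = ?C ! q" unfolding w by (simp add: nth_append)
    moreover have "?C ! q \<in> set ?C" using True by (rule nth_mem)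
    moreover have "x \<le> k' + 1" if "x \<in> set ?C" for x
    proof -
      from that obtain v where v0: "v \<in> set (ws A orc k')" "x \<in> set (blk (Mv A orc (ws A orc k')) v)" by auto
      then have v: "v \<in> set (ws A orc k')" "x \<in> set v" using set_blk by auto
      then obtain i where i: "i < Suc k'" "v = ws A orc k' ! i" using ws_len[of A orc k'] by (metis in_set_conv_nth)
      then have "v = wd A orc i" using ws_nth by simp
      then show ?thesis using wd_vals[of x A orc i] i v by simp
    qed
    ultimately show ?thesis using True Suc w by fastforce
  next
    case False
    then have "q = length ?C" using q w by simp
    then show ?thesis using w Suc by simp
  qed
qed



lemma blk_nth: "m < M * length v \<Longrightarrow> blk M v ! m = v ! (m mod length v)"
proof (induction M arbitrary: m)
  case 0 then show ?case by simp
next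
  case (Suc M)
  have b: "blk (Suc M) v = v @ blk M v" by (simp add: blk_def)
  show ?case
  proof (cases "m < length v")
    case True then show ?thesis unfolding b by (simp add: nth_append)
  next
    case False
    then have "m - length v < M * length v" using Suc.prems by simp
    then have "blk M v ! (m - length v) = v ! ((m - length v) mod length v)" using Suc.IH by simp
    moreover have "(m - length v) mod length v = m mod length v" using False by (simp add: le_mod_geq)
    ultimately show ?thesis unfolding b using False by (simp add: nth_append)
  qed
qed

lemma blk_window:
  assumes nv: "0 < length v" and RS: "R \<le> S" and a1: "S + 1 \<le> a" and a2: "a \<le> S + 2"
    and W: "W = pre @ blk (2 * S + 4) v @ rest" and t: "\<bar>t\<bar> \<le> int R"
  shows "pat W (length pre + a * length v) t = pat v 0 t"
proof -
  let ?nv = "length v" and ?o = "length pre"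
  have "1 \<le> ?nv" using nv by linarith
  then have "a * 1 \<le> a * ?nv" by (rule mult_le_mono2)
  then have h1: "a \<le> a * ?nv" by simp
  have h2: "a * ?nv \<le> (S + 2) * ?nv" using a2 by (rule mult_le_mono1)
  have "(S + 2) * 1 \<le> (S + 2) * ?nv" using \<open>1 \<le> ?nv\<close> by (rule mult_le_mono2)
  then have h3: "S + 2 \<le> (S + 2) * ?nv" by simp
  have h4: "(2 * S + 4) * ?nv = (S + 2) * ?nv + (S + 2) * ?nv" by (simp add: algebra_simps)
  define m where "m = int (a * ?nv) + t"
  have m0: "0 \<le> m" unfolding m_def using h1 a1 RS t by linarith
  have mlt: "m < int ((2 * S + 4) * ?nv)" unfolding m_def using h2 h3 h4 RS t by linarith
  define mm where "mm = nat m"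
  have mm: "int mm = m" using m0 unfolding mm_def by simp
  have mmlt: "mm < (2 * S + 4) * ?nv" using mlt mm by linarith
  have lenW: "length W = ?o + (2 * S + 4) * ?nv + length rest" using W by (simp add: blk_len)
  have e1: "int (?o + a * ?nv) + t = int (?o + mm)" using mm unfolding m_def by simp
  have "?o + mm < length W" using mmlt lenW by linarith
  then have "(?o + mm) mod length W = ?o + mm" by simp
  then have e2: "(int (?o + mm)) mod int (length W) = int (?o + mm)" by (metis of_nat_mod)
  have "pat W (?o + a * ?nv) t = W ! (?o + mm)" unfolding pat_def e1 e2 nat_int by (rule refl)
  also have "\<dots> = blk (2 * S + 4) v ! mm" using W mmlt by (simp add: nth_append blk_len)
  also have "\<dots> = v ! (mm mod ?nv)" using blk_nth[OF mmlt] .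
  also have "mm mod ?nv = nat (t mod int ?nv)"
  proof -
    have "int (mm mod ?nv) = m mod int ?nv" using mm by (simp add: of_nat_mod)
    also have "\<dots> = (t + int a * int ?nv) mod int ?nv" unfolding m_def by (simp add: ac_simps)
    also have "\<dots> = t mod int ?nv" by simp
    finally show ?thesis by simp
  qed
  finally show ?thesis by (simp add: pat_def)
qed



lemma mimic:
  assumes ij: "i < j"
  shows "\<exists>u u'. u < length (wd A orc j) \<and> u' < length (wd A orc j) \<and> u \<noteq> u' \<and>
    (\<forall>t. \<bar>t\<bar> \<le> int (sr A orc (wd A orc i)) \<longrightarrow>
       pat (wd A orc j) u t = pat (wd A orc i) 0 t \<and> pat (wd A orc j) u' t = pat (wd A orc i) 0 t)"
proof -
  obtain k where j: "j = Suc k" and ik: "i \<le> k" using ij by (cases j) auto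
  define L where "L = ws A orc k"
  define S where "S = sum_list (map (sr A orc) L)"
  define M where "M = Mv A orc L"
  have M: "M = 2 * S + 4" unfolding M_def S_def Mv_def by simp
  have iL: "i < length L" unfolding L_def ws_len using ik by simp
  have Li: "L ! i = wd A orc i" unfolding L_def using ws_nth[OF ik] .
  define pre where "pre = concat (map (blk M) (take i L))"
  define rest where "rest = concat (map (blk M) (drop (Suc i) L)) @ [k + 2]"
  have Lsplit: "L = take i L @ L ! i # drop (Suc i) L" using id_take_nth_drop[OF iL] .
  have W: "wd A orc j = pre @ blk M (wd A orc i) @ rest"
  proof -
    have "wd A orc j = concat (map (blk M) L) @ [k + 2]" unfolding j wd_Suc M_def L_def ..
    also have "concat (map (blk M) L) = pre @ blk M (wd A orc i) @ concat (map (blk M) (drop (Suc i) L))"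
      unfolding pre_def by (subst Lsplit) (simp add: Li)
    finally show ?thesis unfolding rest_def by simp
  qed
  have "wd A orc i \<in> set L" using iL Li by (metis nth_mem)
  then have "sr A orc (wd A orc i) \<in> set (map (sr A orc) L)" by simp
  then have RS: "sr A orc (wd A orc i) \<le> S" unfolding S_def by (rule member_le_sum_list) auto
  let ?nv = "length (wd A orc i)"
  have nv: "0 < ?nv" using wd_len[of A orc i] by linarith
  define u where "u = length pre + (S + 1) * ?nv"
  define u' where "u' = length pre + (S + 2) * ?nv"
  have W': "wd A orc j = pre @ blk (2 * S + 4) (wd A orc i) @ rest" using W M by simp
  have pu: "pat (wd A orc j) u t = pat (wd A orc i) 0 t" if "\<bar>t\<bar> \<le> int (sr A orc (wd A orc i))" for t
    unfolding u_def by (rule blk_window[OF nv RS _ _ W' that]) auto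
  have pu': "pat (wd A orc j) u' t = pat (wd A orc i) 0 t" if "\<bar>t\<bar> \<le> int (sr A orc (wd A orc i))" for t
    unfolding u'_def by (rule blk_window[OF nv RS _ _ W' that]) auto
  have lenW: "length (wd A orc j) = length pre + (2 * S + 4) * ?nv + length rest"
    using W' by (simp add: blk_len)
  have "(S + 2) * ?nv < (2 * S + 4) * ?nv" using nv by (intro mult_less_mono1) auto
  then have u'lt: "u' < length (wd A orc j)" unfolding u'_def lenW by linarith
  have "(S + 1) * ?nv < (S + 2) * ?nv" using nv by (intro mult_less_mono1) auto
  then have "u < u'" unfolding u_def u'_def by linarith
  then show ?thesis using u'lt pu pu' by (intro exI[of _ u] exI[of _ u']) auto
qed



theorem proposition7:
  fixes b :: nat
  shows "\<not> (\<exists>(A :: algorithm) (oracle :: pgraph \<Rightarrow> bool list).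
             \<forall>G. port_graph G \<and> feasible G \<longrightarrow>
                 length (oracle G) \<le> b \<and> elects_leader A (oracle G) G)"
proof
  assume "\<exists>(A :: algorithm) (oracle :: pgraph \<Rightarrow> bool list).
             \<forall>G. port_graph G \<and> feasible G \<longrightarrow>
                 length (oracle G) \<le> b \<and> elects_leader A (oracle G) G"
  then obtain A :: algorithm and orc :: "pgraph \<Rightarrow> bool list" where
    H: "\<And>G. port_graph G \<Longrightarrow> feasible G \<Longrightarrow> length (orc G) \<le> b \<and> elects_leader A (orc G) G"
    by blast
  define G where "G k = cyc (wd A orc k)" for k
  have n3: "3 \<le> length (wd A orc k)" for k using wd_len .
  have pgk: "port_graph (G k)" for k unfolding G_def using port_graph_cyc[OF n3] .
  have fk: "feasible (G k)" for k
  proof -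
    let ?w = "wd A orc k"
    have "length ?w - 1 < length ?w" using n3[of k] by linarith
    moreover have "\<And>q. q < length ?w \<Longrightarrow> ?w ! q = k + 1 \<longleftrightarrow> q = length ?w - 1"
      using wd_uniq[of _ A orc k] by blast
    ultimately show ?thesis unfolding G_def by (rule feasible_cyc[OF n3, rotated])
  qed
  have Hk: "length (orc (G k)) \<le> b" "elects_leader A (orc (G k)) (G k)" for k
    using H[OF pgk fk] by auto
  define f where "f k = orc (G k)" for k
  have "f ` UNIV \<subseteq> {xs. set xs \<subseteq> (UNIV :: bool set) \<and> length xs \<le> b}" using Hk(1) unfolding f_def by auto
  then have "finite (f ` UNIV)" using finite_lists_length_le[of "UNIV :: bool set" b] finite_subset by auto
  then obtain i where inf: "infinite {k \<in> UNIV. f k = f i}" using pigeonhole_infinite[of UNIV f] by auto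
  have "\<exists>j>i. f j = f i"
  proof (rule ccontr)
    assume "\<not> (\<exists>j>i. f j = f i)"
    then have "{k \<in> UNIV. f k = f i} \<subseteq> {..i}" by (auto simp: not_less[symmetric])
    then show False using inf finite_subset by blast
  qed
  then obtain j where ij: "i < j" "f j = f i" by auto
  define s where "s = f i"
  have sj: "orc (G j) = s" "orc (G i) = s" using ij unfolding s_def f_def by auto
  have "0 < length (wd A orc i)" using n3[of i] by linarith
  then have v0: "0 \<in> verts (G i)" unfolding G_def by (rule vin[OF n3])
  obtain r0 out0 where r0: "A s (aview (G i) r0 0) = Some out0" "\<forall>r'<r0. A s (aview (G i) r' 0) = None"
  proof -
    from Hk(2)[of i] obtain ldr0 where "\<forall>v\<in>verts (G i). \<exists>r out. A (orc (G i)) (aview (G i) r v) = Some out \<and>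
        (\<forall>r'<r. A (orc (G i)) (aview (G i) r' v) = None) \<and> path_output (G i) v out ldr0"
      unfolding elects_leader_def by blast
    then obtain r out where "A (orc (G i)) (aview (G i) r 0) = Some out" "\<forall>r'<r. A (orc (G i)) (aview (G i) r' 0) = None"
      using v0 by blast
    then show ?thesis using that sj by simp
  qed
  have sr: "sr A orc (wd A orc i) = r0"
    unfolding sr_def
  proof (rule Least_equality)
    show "A (orc (cyc (wd A orc i))) (aview (cyc (wd A orc i)) r0 0) \<noteq> None"
      using r0(1) sj unfolding G_def by simp
    fix y assume "A (orc (cyc (wd A orc i))) (aview (cyc (wd A orc i)) y 0) \<noteq> None"
    then have "A s (aview (G i) y 0) \<noteq> None" using sj unfolding G_def by simp
    then show "r0 \<le> y" using r0(2) by (meson not_le)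
  qed
  obtain u u' where uu: "u < length (wd A orc j)" "u' < length (wd A orc j)" "u \<noteq> u'"
    "\<forall>t. \<bar>t\<bar> \<le> int r0 \<longrightarrow> pat (wd A orc j) u t = pat (wd A orc i) 0 t \<and> pat (wd A orc j) u' t = pat (wd A orc i) 0 t"
    using mimic[OF ij(1), of A orc] sr by auto
  have views: "aview (G j) r x = aview (G i) r 0" if "r \<le> r0" "x = u \<or> x = u'" for r x
  proof -
    have xl: "x < length (wd A orc j)" using that uu by auto
    have "lview (pat (wd A orc j) x) r = lview (pat (wd A orc i) 0) r"
      by (rule lview_cong) (use that uu(4) in auto)
    then show ?thesis unfolding G_def using aview_lview[OF n3 xl] aview_lview[OF n3 \<open>0 < length (wd A orc i)\<close>] by simp
  qed
  obtain ldr where ldr: "\<forall>v\<in>verts (G j). \<exists>r out. A s (aview (G j) r v) = Some out \<and>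
        (\<forall>r'<r. A s (aview (G j) r' v) = None) \<and> path_output (G j) v out ldr"
    using Hk(2)[of j] sj unfolding elects_leader_def by auto
  have po: "path_output (G j) x out0 ldr" if "x = u \<or> x = u'" for x
  proof -
    have xl: "x < length (wd A orc j)" using that uu by auto
    have "x \<in> verts (G j)" unfolding G_def using vin[OF n3 xl] .
    then obtain r out where ro: "A s (aview (G j) r x) = Some out" "\<forall>r'<r. A s (aview (G j) r' x) = None"
      "path_output (G j) x out ldr" using ldr by blast
    have "out = out0" by (rule stop_transfer[where A=A and s=s and G="G i" and v=0 and D="G j" and x=x, OF r0 ro(1,2)]) (rule views[OF _ that])
    then show ?thesis using ro(3) by simp
  qed
  have "u = u'" using path_unique[OF pgk po[of u] po[of u']] by simp
  then show False using uu(3) by simp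
qed



end
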